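(* Let $U\sim\mathrm{unif}(0,1)$. For all $n\ge1$, $$b_n:=\big\|C_n(\lceil nU\rceil)-C(U)\big\|_2\le \Big(3+\frac{2\pi}{\sqrt3}\Big)\frac1n<\frac{6.63}{n}.$$
   Context: Let $H_n=\sum_{k=1}^n 1/k$ and $\mu_n := 2(n+1)H_n-4n$ for $n\ge0$; this is the expected number of comparisons of randomized Quicksort on $n$ distinct numbers. For $n\ge1$ and $1\le i\le n$, define $$C_n(i):=\frac{n-1}{n}+\frac1n\big(\mu_{i-1}+\mu_{n-i}-\mu_n\big).$$ Define $C(u):=2u\ln u+2(1-u)\ln(1-u)+1$ for $u\in[0,1]$, with $C(0)=C(1)=1$. $\|\cdot\|_2$ denotes the $L^2$ norm. *)

theory Defs
  imports "HOL-Analysis.Analysis" "HOL-Probability.Probability"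
begin

definition H :: "nat \<Rightarrow> real" where
  "H n = (\<Sum>k=1..n. 1 / real k)"

definition mu :: "nat \<Rightarrow> real" where
  "mu n = 2 * (real n + 1) * H n - 4 * real n"

definition Cn :: "nat \<Rightarrow> nat \<Rightarrow> real" where
  "Cn n i = (real n - 1) / real n + (mu (i - 1) + mu (n - i) - mu n) / real n"

definition Cfun :: "real \<Rightarrow> real" where
  "Cfun u = (if u = 0 \<or> u = 1 then 1 else 2 * u * ln u + 2 * (1 - u) * ln (1 - u) + 1)"

definition b :: "nat \<Rightarrow> real" where
  "b n = sqrt (\<integral>u. (Cn n (nat \<lceil>real n * u\<rceil>) - Cfun u)\<^sup>2 \<partial>(uniform_measure lborel {0..1}))"

end

theory Submission
  imports Defs
begin


definition F1 :: "real \<Rightarrow> real" where "F1 x = x - x * ln x"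
definition F2 :: "real \<Rightarrow> real" where "F2 x = x * (ln x)^2 - 2 * x * ln x + 2 * x"
definition G :: "real \<Rightarrow> real" where
  "G u = 10 - 4 * ln u - 4 * ln (1 - u) + 4 * (ln u)^2 + 4 * (ln (1 - u))^2"

lemma xln_tendsto: "((\<lambda>x::real. x * ln x) \<longlongrightarrow> 0) (at_right 0)" by real_asymp
lemma xln2_tendsto: "((\<lambda>x::real. x * (ln x)^2) \<longlongrightarrow> 0) (at_right 0)" by real_asymp

lemma cont_xln: "continuous_on {0..1} (\<lambda>x::real. x * ln x)"
proof (rule continuous_on_eq_continuous_within[THEN iffD2], intro ballI)
  fix x :: real assume x: "x \<in> {0..1}"
  show "continuous (at x within {0..1}) (\<lambda>x. x * ln x)"
  proof (cases "x = 0")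
    case True
    have "((\<lambda>x::real. x * ln x) \<longlongrightarrow> 0) (at 0 within {0..1})"
      by (rule tendsto_mono[OF _ xln_tendsto]) (simp add: at_within_Icc_at_right)
    then show ?thesis using True by (simp add: continuous_within)
  next
    case False
    then have "x > 0" using x by auto
    then have "isCont (\<lambda>x. x * ln x) x" by (auto intro!: continuous_intros)
    then show ?thesis by (simp add: continuous_at_imp_continuous_at_within)
  qed
qed

lemma cont_xln2: "continuous_on {0..1} (\<lambda>x::real. x * (ln x)^2)"
proof (rule continuous_on_eq_continuous_within[THEN iffD2], intro ballI)
  fix x :: real assume x: "x \<in> {0..1}"
  show "continuous (at x within {0..1}) (\<lambda>x. x * (ln x)^2)"
  proof (cases "x = 0")
    case True
    have "((\<lambda>x::real. x * (ln x)^2) \<longlongrightarrow> 0) (at 0 within {0..1})"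
      by (rule tendsto_mono[OF _ xln2_tendsto]) (simp add: at_within_Icc_at_right)
    then show ?thesis using True by (simp add: continuous_within)
  next
    case False
    then have "x > 0" using x by auto
    then have "isCont (\<lambda>x. x * (ln x)^2) x" by (auto intro!: continuous_intros)
    then show ?thesis by (simp add: continuous_at_imp_continuous_at_within)
  qed
qed

lemma cont_F1: "continuous_on {0..1} F1"
  unfolding F1_def by (intro continuous_intros cont_xln)
lemma cont_F2: "continuous_on {0..1} F2"
proof -
  have "F2 = (\<lambda>x. x * (ln x)^2 - 2 * (x * ln x) + 2 * x)" by (auto simp: F2_def fun_eq_iff)
  show ?thesis unfolding \<open>F2 = _\<close> by (intro continuous_intros cont_xln cont_xln2)
qed

lemma cont_comp1: "continuous_on {0..1} f \<Longrightarrow> continuous_on {0..1} (\<lambda>x::real. f (1 - x))"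
  by (rule continuous_on_compose2[of "{0..1}" f "{0..1}" "\<lambda>x. 1 - x"]) (auto intro!: continuous_intros)

lemma F1_deriv: "x > 0 \<Longrightarrow> (F1 has_real_derivative - ln x) (at x)"
  unfolding F1_def by (auto intro!: derivative_eq_intros simp: field_simps)
lemma F2_deriv: "x > 0 \<Longrightarrow> (F2 has_real_derivative (ln x)^2) (at x)"
  unfolding F2_def by (auto intro!: derivative_eq_intros simp: field_simps power2_eq_square)

lemma G_integral: "(G has_integral 34) {0..1}"
proof -
  define P where "P u = 10 * u + 4 * (F1 u - F1 (1 - u)) + 4 * (F2 u - F2 (1 - u))" for u
  have "(G has_integral P 1 - P 0) {0..1}"
  proof (rule fundamental_theorem_of_calculus_interior)
    show "continuous_on {0..1} P" unfolding P_def
      by (intro continuous_intros cont_F1 cont_F2 cont_comp1)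
    fix x :: real assume x: "x \<in> {0<..<1}"
    show "(P has_vector_derivative G x) (at x)"
      unfolding P_def G_def has_real_derivative_iff_has_vector_derivative[symmetric]
      using x by (auto intro!: derivative_eq_intros F1_deriv F2_deriv[THEN DERIV_chain2] F1_deriv[THEN DERIV_chain2] F2_deriv simp: field_simps power2_eq_square)
  qed simp
  moreover have "P 1 - P 0 = 34" by (simp add: P_def F1_def F2_def)
  ultimately show ?thesis by simp
qed

lemma G_nonneg: "0 \<le> G u"
proof -
  have "0 \<le> (ln u - 1/2)^2" "0 \<le> (ln (1-u) - 1/2)^2" by auto
  then show ?thesis unfolding G_def by (simp add: power2_eq_square algebra_simps)
qed

lemma G_meas[measurable]: "G \<in> borel_measurable borel"
  unfolding G_def by measurable

lemma unif_eq: "uniform_measure lborel {0..1::real} = density lborel (\<lambda>x. ennreal (indicator {0..1} x))"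
  unfolding uniform_measure_def by (simp add: ennreal_indicator) (simp add: divide_ennreal_def)

lemma G_unif: "integrable (uniform_measure lborel {0..1::real}) G"
      "(\<integral>u. G u \<partial>uniform_measure lborel {0..1::real}) = 34"
proof -
  have ai: "G absolutely_integrable_on {0..1}"
    by (rule nonnegative_absolutely_integrable_1) (use G_integral G_nonneg in auto)
  then have si: "set_integrable lborel {0..1} G"
    unfolding set_integrable_def
    by (subst integrable_completion[symmetric]) (auto simp: set_integrable_def)
  show "integrable (uniform_measure lborel {0..1::real}) G"
    unfolding unif_eq using si unfolding set_integrable_def
    by (subst integrable_density) auto
  have "(\<integral>u. G u \<partial>uniform_measure lborel {0..1::real}) = (LINT x:{0..1}|lborel. G x)"
    unfolding unif_eq set_lebesgue_integral_def
    by (subst integral_density) auto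
  also have "\<dots> = integral {0..1} G" by (rule set_borel_integral_eq_integral(2)[OF si])
  also have "\<dots> = 34" using G_integral by (simp add: integral_unique)
  finally show "(\<integral>u. G u \<partial>uniform_measure lborel {0..1::real}) = 34" .
qed



lemma psi_conv: "0 < p \<Longrightarrow> 0 < (q::real) \<Longrightarrow> p * ln p - q * ln q \<ge> (p - q) * (1 + ln q)"
proof -
  assume a: "0 < p" and b: "0 < q"
  have "ln (q / p) \<le> q / p - 1" using a b by (intro ln_le_minus_one) auto
  then have "ln q - ln p \<le> q / p - 1" using a b by (simp add: ln_div)
  then have "p * (ln q - ln p) \<le> p * (q / p - 1)" using a by (intro mult_left_mono) auto
  then have "p * ln q - p * ln p \<le> q - p" using a by (simp add: algebra_simps)
  then show ?thesis by (simp add: algebra_simps)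
qed

lemma H_Suc: "H (Suc k) = H k + 1 / (real k + 1)"
  by (simp add: H_def add.commute)

lemma H_0: "H 0 = 0" by (simp add: H_def)

lemma c_inc: "k \<le> n \<Longrightarrow> H k - ln (real k + 1) \<le> H n - ln (real n + 1)"
proof (induction n rule: dec_induct)
  case (step m)
  have "ln (real m + 1 + 1) - ln (real m + 1) < 1 / (real m + 1)"
    by (rule ln_diff_le_inverse) auto
  then have "ln (real m + 2) - ln (real m + 1) < 1 / (real m + 1)" by (simp add: add.assoc)
  moreover have e: "real (Suc m) + 1 = real m + 2" by simp
  ultimately show ?case using step(3) unfolding H_Suc e by linarith
qed simp

lemma c_dec: "k \<le> n \<Longrightarrow> H n - ln (real n + 1/2) \<le> H k - ln (real k + 1/2)"
proof (induction n rule: dec_induct)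
  case (step m)
  have "ln (real m + 3/2) - ln (real m + 1/2) \<ge> 2 * ((real m + 3/2) - (real m + 1/2)) / ((real m + 1/2) + (real m + 3/2))"
    by (rule ln_inverse_approx_ge) auto
  moreover have "2 * ((real m + 3/2) - (real m + 1/2)) / ((real m + 1/2) + (real m + 3/2)) = 1 / (real m + 1)"
    by (simp add: field_simps)
  moreover have e: "real (Suc m) + 1/2 = real m + 3/2" by simp
  ultimately show ?case using step(3) unfolding H_Suc e by linarith
qed simp

lemma pw:
  assumes n: "n \<ge> 1" and u: "0 < u" "u < 1"
  shows "real n * (Cn n (nat \<lceil>real n * u\<rceil>) - Cfun u) \<le> 3"
    and "real n * (Cn n (nat \<lceil>real n * u\<rceil>) - Cfun u) \<ge> -1 + 2 * min (ln u) (ln (1 - u))"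
proof -
  define i where "i = nat \<lceil>real n * u\<rceil>"
  define r where "r = real n"
  define x where "x = r * u"
  define a where "a = real i"
  have r1: "r \<ge> 1" using n by (simp add: r_def)
  have x0: "0 < x" using u r1 by (simp add: x_def)
  have xr: "x < r" using u r1 by (simp add: x_def)
  have ceq: "\<lceil>real n * u\<rceil> = \<lceil>x\<rceil>" by (simp add: x_def r_def)
  have cpos: "\<lceil>x\<rceil> \<ge> 1" using x0 by (simp add: one_le_ceiling)
  have a_eq: "a = of_int \<lceil>x\<rceil>" unfolding a_def i_def ceq using cpos by simp
  have a1: "a \<ge> 1" using a_eq cpos by simp
  have i1: "i \<ge> 1" using a1 by (simp add: a_def)
  have ax: "a - 1 < x" "x \<le> a" using a_eq ceiling_correct[of x] by linarith+
  have "x \<le> of_int (int n)" using xr by (simp add: r_def)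
  then have "\<lceil>x\<rceil> \<le> int n" by (rule ceiling_le)
  then have "i \<le> n" unfolding i_def ceq using xr r_def by simp
  then have ar: "a \<le> r" by (simp add: a_def r_def)
  have ri1: "real (i - 1) = a - 1" using i1 by (simp add: a_def of_nat_diff)
  have rni: "real (n - i) = r - a" using \<open>i \<le> n\<close> by (simp add: a_def r_def of_nat_diff)
  have m1: "mu (i-1) = 2*a*H(i-1) - 4*(a-1)" unfolding mu_def ri1 by simp
  have m2: "mu (n-i) = 2*(r-a+1)*H(n-i) - 4*(r-a)" unfolding mu_def rni by simp
  have m3: "mu n = 2*(r+1)*H n - 4*r" unfolding mu_def r_def by simp
  have lu: "ln u = ln x - ln r" using u r1 by (simp add: x_def ln_mult)
  have "1 - u = (r - x) / r" using r1 by (simp add: x_def field_simps)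
  then have lu1: "ln (1 - u) = ln (r - x) - ln r" using xr r1 by (simp add: ln_div)
  have cf: "Cfun u = 2 * u * ln u + 2 * (1 - u) * ln (1 - u) + 1" using u by (simp add: Cfun_def)
  have "r * Cfun u = 2 * (r * u) * ln u + 2 * (r - r * u) * ln (1 - u) + r"
    unfolding cf by (simp add: algebra_simps)
  also have "\<dots> = 2 * (x * ln x) + 2 * ((r - x) * ln (r - x)) - 2 * (r * ln r) + r"
    unfolding lu lu1 x_def[symmetric] by (simp add: algebra_simps)
  finally have rc: "r * Cfun u = 2 * (x * ln x) + 2 * ((r - x) * ln (r - x)) - 2 * (r * ln r) + r" .
  have rcn: "r * Cn n i = r - 1 + mu (i-1) + mu (n-i) - mu n"
    unfolding Cn_def r_def[symmetric] using r1 by (simp add: field_simps)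
  have ident: "r * (Cn n i - Cfun u) = 3 + 2*a*H(i-1) + 2*(r-a+1)*H(n-i) - 2*(r+1)*H n
      - 2*(x*ln x) - 2*((r-x)*ln(r-x)) + 2*(r*ln r)"
    unfolding right_diff_distrib rc rcn m1 m2 m3 by (simp add: algebra_simps)
  have xr0: "0 < r - x" using xr by simp
  have ci1: "H(i-1) - ln a \<le> H n - ln (r+1)"
    using c_inc[of "i-1" n] \<open>i \<le> n\<close> unfolding ri1 r_def by simp
  have ci2: "H(n-i) - ln (r-a+1) \<le> H n - ln (r+1)"
    using c_inc[of "n-i" n] unfolding rni r_def by simp
  have p1: "a*H(i-1) \<le> a*(H n - ln (r+1) + ln a)"
    using ci1 a1 by (intro mult_left_mono) auto
  have p2: "(r-a+1)*H(n-i) \<le> (r-a+1)*(H n - ln (r+1) + ln (r-a+1))"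
    using ci2 ar by (intro mult_left_mono) auto
  have v1: "x * ln x - a * ln a \<ge> (x - a) * (1 + ln a)" using psi_conv[of x a] x0 a1 by simp
  have v2: "(r-x) * ln (r-x) - (r-a+1) * ln (r-a+1) \<ge> ((r-x) - (r-a+1)) * (1 + ln (r-a+1))"
    using psi_conv[of "r-x" "r-a+1"] xr0 ar by simp
  have v3: "(r+1) * ln (r+1) - r * ln r \<ge> ((r+1) - r) * (1 + ln r)"
    using psi_conv[of "r+1" r] r1 by simp
  have s1: "(a-x) * (ln a - ln r) \<le> 0"
    using ax ar a1 by (intro mult_nonneg_nonpos) auto
  have s2: "(x-a+1) * (ln (r-a+1) - ln r) \<le> 0"
    using ax ar a1 by (intro mult_nonneg_nonpos) auto
  have "r * (Cn n i - Cfun u) \<le> 3"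
    unfolding ident using p1 p2 v1 v2 v3 s1 s2 by (simp add: algebra_simps)
  then show "real n * (Cn n (nat \<lceil>real n * u\<rceil>) - Cfun u) \<le> 3" by (simp add: r_def i_def)
  have ri2: "real (i - 1) + 1/2 = a - 1/2" using ri1 by simp
  have rni2: "real (n - i) + 1/2 = r - a + 1/2" using rni by simp
  have cd1: "H n - ln (r+1/2) \<le> H(i-1) - ln (a-1/2)"
    using c_dec[of "i-1" n] \<open>i \<le> n\<close> unfolding ri2 r_def by simp
  have cd2: "H n - ln (r+1/2) \<le> H(n-i) - ln (r-a+1/2)"
    using c_dec[of "n-i" n] unfolding rni2 r_def by simp
  have q1: "a*H(i-1) \<ge> a*(H n - ln (r+1/2) + ln (a-1/2))"
    using cd1 a1 by (intro mult_left_mono) auto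
  have q2: "(r-a+1)*H(n-i) \<ge> (r-a+1)*(H n - ln (r+1/2) + ln (r-a+1/2))"
    using cd2 ar by (intro mult_left_mono) auto
  have lx: "ln x = ln r + ln u" using lu by simp
  have lrx: "ln (r - x) = ln r + ln (1 - u)" using lu1 by simp
  have w1: "(a-1/2) * ln (a-1/2) - x * ln x \<ge> (a-1/2-x) * (1 + ln r + ln u)"
    using psi_conv[of "a-1/2" x] x0 a1 unfolding lx by (simp add: add.assoc)
  have w2: "(r-a+1/2) * ln (r-a+1/2) - (r-x) * ln (r-x) \<ge> (x-a+1/2) * (1 + ln r + ln (1 - u))"
  proof -
    have d: "(r-a+1/2) - (r-x) = x-a+1/2" by simp
    show ?thesis using psi_conv[of "r-a+1/2" "r-x"] xr0 ar unfolding lrx d by (simp add: add.assoc)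
  qed
  have w3: "r * ln r - (r+1/2) * ln (r+1/2) \<ge> (-1/2) * (1 + ln (r+1/2))"
    using psi_conv[of r "r+1/2"] r1 by simp
  have "x / 2 \<le> a - 1/2" using ax a1 by simp
  then have "ln (x / 2) \<le> ln (a - 1/2)" using x0 by simp
  then have g1: "ln (a - 1/2) \<ge> ln r + ln u - ln 2" using x0 lx by (simp add: ln_div)
  have "(r - x) / 2 \<le> r - a + 1/2" using ax ar by simp
  then have "ln ((r - x) / 2) \<le> ln (r - a + 1/2)" using xr0 by simp
  then have g2: "ln (r - a + 1/2) \<ge> ln r + ln (1 - u) - ln 2" using xr0 lrx by (simp add: ln_div)
  have "ln ((r + 1/2) / r) \<le> (r + 1/2) / r - 1" using r1 by (intro ln_le_minus_one) auto
  also have "\<dots> \<le> 1/2" using r1 by (simp add: field_simps)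
  finally have g3: "ln (r + 1/2) \<le> ln r + 1/2" using r1 by (simp add: ln_div)
  have g4: "ln (2::real) \<le> 1" using ln_le_minus_one[of 2] by simp
  define m where "m = min (ln u) (ln (1 - u))"
  have e1: "(a-x) * ln u \<ge> (a-x) * m" using ax by (intro mult_left_mono) (auto simp: m_def)
  have e2: "(x-a+1) * ln (1-u) \<ge> (x-a+1) * m" using ax by (intro mult_left_mono) (auto simp: m_def)
  have "r * (Cn n i - Cfun u) \<ge> -1 + 2 * m"
    using q1 q2 w1 w2 w3 g1 g2 g3 g4 e1 e2 unfolding ident lx lrx by (simp add: ring_distribs)
  then show "real n * (Cn n (nat \<lceil>real n * u\<rceil>) - Cfun u) \<ge> -1 + 2 * min (ln u) (ln (1 - u))"
    by (simp add: r_def i_def m_def)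
qed



lemma pw_sq:
  assumes n: "n \<ge> 1" and u: "0 \<le> u" "u < 1"
  shows "(Cn n (nat \<lceil>real n * u\<rceil>) - Cfun u)\<^sup>2 \<le> G u / (real n)\<^sup>2"
proof (cases "u = 0")
  case True
  have "Cn n 0 - Cfun 0 = - 1 / real n" using n by (simp add: Cn_def mu_def H_0 Cfun_def field_simps)
  then have "(Cn n (nat \<lceil>real n * u\<rceil>) - Cfun u)\<^sup>2 = (1 / real n)\<^sup>2"
    using True by (simp add: power2_eq_square)
  also have "\<dots> \<le> G u / (real n)\<^sup>2" using True n by (simp add: G_def power_divide divide_right_mono)
  finally show ?thesis .
next
  case False
  then have u0: "0 < u" using u by simp
  define d where "d = real n * (Cn n (nat \<lceil>real n * u\<rceil>) - Cfun u)"
  define L1 where "L1 = - ln u"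
  define L2 where "L2 = - ln (1 - u)"
  have L1: "L1 \<ge> 0" using u0 u by (simp add: L1_def)
  have L2: "L2 \<ge> 0" using u0 u by (simp add: L2_def)
  have du: "d \<le> 3" using pw(1)[OF n u0 u(2)] by (simp add: d_def)
  have dl: "d \<ge> -1 - 2 * max L1 L2" using pw(2)[OF n u0 u(2)]
    by (simp add: d_def L1_def L2_def min_def max_def split: if_splits)
  have GL: "G u = 10 + 4 * L1 + 4 * L2 + 4 * L1\<^sup>2 + 4 * L2\<^sup>2" by (simp add: G_def L1_def L2_def)
  have "d\<^sup>2 \<le> G u"
  proof (cases "d \<ge> 0")
    case True
    then have "d\<^sup>2 \<le> 3\<^sup>2" using du by (intro power_mono) auto
    then have "d\<^sup>2 \<le> 9" by simp
    moreover have "0 \<le> L1\<^sup>2" "0 \<le> L2\<^sup>2" by simp_all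
    ultimately show ?thesis using L1 L2 unfolding GL by linarith
  next
    case False
    define M where "M = max L1 L2"
    have M0: "M \<ge> 0" using L1 L2 by (simp add: M_def)
    have "d\<^sup>2 = (-d)\<^sup>2" by simp
    also have "\<dots> \<le> (1 + 2 * M)\<^sup>2" using False dl by (intro power_mono) (auto simp: M_def)
    also have "\<dots> = 1 + 4 * M + 4 * M\<^sup>2" by (simp add: power2_eq_square algebra_simps)
    also have "\<dots> \<le> G u"
    proof -
      have "M \<le> L1 + L2" using L1 L2 by (simp add: M_def)
      moreover have "M\<^sup>2 \<le> L1\<^sup>2 + L2\<^sup>2" using L1 L2 by (auto simp: M_def max_def)
      ultimately show ?thesis unfolding GL by simp
    qed
    finally show ?thesis .
  qed
  moreover have "d\<^sup>2 = (real n)\<^sup>2 * (Cn n (nat \<lceil>real n * u\<rceil>) - Cfun u)\<^sup>2"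
    by (simp add: d_def power_mult_distrib)
  ultimately have "(real n)\<^sup>2 * (Cn n (nat \<lceil>real n * u\<rceil>) - Cfun u)\<^sup>2 \<le> G u" by simp
  moreover have "(real n)\<^sup>2 > 0" using n by simp
  ultimately show ?thesis by (simp add: pos_le_divide_eq mult.commute)
qed

lemma integral_bound:
  assumes n: "n \<ge> 1"
  shows "(\<integral>u. (Cn n (nat \<lceil>real n * u\<rceil>) - Cfun u)\<^sup>2 \<partial>uniform_measure lborel {0..1}) \<le> 34 / (real n)\<^sup>2"
proof -
  let ?M = "uniform_measure lborel {0..1::real}"
  have "(\<integral>u. (Cn n (nat \<lceil>real n * u\<rceil>) - Cfun u)\<^sup>2 \<partial>?M) \<le> (\<integral>u. G u / (real n)\<^sup>2 \<partial>?M)"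
  proof (rule integral_mono_AE')
    show "integrable ?M (\<lambda>u. G u / (real n)\<^sup>2)" using G_unif(1) by simp
    show "AE x in ?M. 0 \<le> G x / (real n)\<^sup>2" using G_nonneg by simp
    show "AE x in ?M. (Cn n (nat \<lceil>real n * x\<rceil>) - Cfun x)\<^sup>2 \<le> G x / (real n)\<^sup>2"
    proof (rule AE_uniform_measureI)
      show "{0..1::real} \<in> sets lborel" by simp
      show "AE x in lborel. x \<in> {0..1} \<longrightarrow> (Cn n (nat \<lceil>real n * x\<rceil>) - Cfun x)\<^sup>2 \<le> G x / (real n)\<^sup>2"
        using AE_lborel_singleton[of "1::real"]
        by eventually_elim (use pw_sq[OF n] in auto)
    qed
  qed
  also have "\<dots> = 34 / (real n)\<^sup>2" using G_unif(2) by simp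
  finally show ?thesis .
qed

theorem lemma2p2:
  fixes n :: nat
  assumes "n \<ge> 1"
  shows "b n \<le> (3 + 2 * pi / sqrt 3) / real n \<and> (3 + 2 * pi / sqrt 3) / real n < 6.63 / real n"
proof
  have n0: "real n > 0" using assms by simp
  have s3: "sqrt 3 \<le> (2::real)" by (simp add: real_sqrt_le_iff' )
  have s3p: "sqrt 3 > (0::real)" by simp
  have "3 * sqrt 3 \<le> 2 * pi" using s3 pi_gt3 by linarith
  then have k6: "3 \<le> 2 * pi / sqrt 3" using s3p by (simp add: field_simps)
  have "b n \<le> sqrt (34 / (real n)\<^sup>2)"
    unfolding b_def using integral_bound[OF assms] by simp
  also have "\<dots> = sqrt 34 / real n" using n0 by (simp add: real_sqrt_divide)
  also have "\<dots> \<le> 6 / real n"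
  proof -
    have "sqrt 34 \<le> (6::real)" by (simp add: real_sqrt_le_iff')
    then show ?thesis by (rule divide_right_mono) (use n0 in simp)
  qed
  also have "\<dots> \<le> (3 + 2 * pi / sqrt 3) / real n" using k6 n0 by (simp add: divide_right_mono)
  finally show "b n \<le> (3 + 2 * pi / sqrt 3) / real n" .
  have "(1.732::real) = sqrt (1.732\<^sup>2)" by simp
  also have "\<dots> < sqrt 3" by (simp add: power2_eq_square)
  finally have s3l: "1.732 < sqrt (3::real)" .
  have "2 * pi < 3.63 * 1.732" using pi_approx(2) by simp
  also have "\<dots> < 3.63 * sqrt 3" using s3l by simp
  finally have "2 * pi / sqrt 3 < 3.63" using s3p by (simp add: field_simps)
  then have "3 + 2 * pi / sqrt 3 < 6.63" by simp
  then show "(3 + 2 * pi / sqrt 3) / real n < 6.63 / real n" by (rule divide_strict_right_mono) (use n0 in simp)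
qed

end
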